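(* Let $S_1, S_2$ be triangle meshes with $n_1$ and $n_2$ vertices, and for $i=1,2$ let $\Phi_i \in \mathbb{R}^{n_i \times k}$ be the matrix of the first $k$ eigenfunctions of the cotangent Laplace–Beltrami operator of $S_i$, normalized so that $\Phi_i^T A_i \Phi_i = \mathbb{I}$, where $A_i$ is the area (mass) matrix of $S_i$. Put $\Phi_i^{\dagger} = \Phi_i^T A_i$. Let $F_1 \in \mathbb{R}^{n_1\times p}$ and $F_2 \in \mathbb{R}^{n_2 \times p}$ be feature matrices produced by a feature extractor that is complete, i.e. $F_i = \Phi_i \Phi_i^{\dagger} F_i$ for $i=1,2$. Let $\mathbf{A}_1 = \Phi_1^{\dagger} F_1$, $\mathbf{A}_2 = \Phi_2^{\dagger} F_2$, and $\mathbf{C}_{\rm opt} = \arg\min_{\mathbf{C}\in\mathbb{R}^{k\times k}} \|\mathbf{C}\mathbf{A}_1 - \mathbf{A}_2\|_F$. Assume that all optimization problems below have unique global minimizers (in particular $\mathbf{A}_1$ has full rank, and in problems of the form $\arg\min_{\Pi}\|\Pi G_1 - G_2\|$ the rows of $G_1$ are pairwise distinct). Then: (1) If $\Pi F_1 = F_2$ for some point-to-point map matrix $\Pi \in \{0,1\}^{n_2\times n_1}$, then $\mathbf{C}_{12} = \Phi_2^{\dagger}\Pi\Phi_1$ is basis-aligning; moreover $\mathbf{C}_{12} = \mathbf{C}_{\rm opt}$, and the point-to-point map obtained from $\mathbf{C}_{\rm opt}$ by the adjoint method, $\arg\min_{\Pi'} \|\Pi'\Phi_1 - \Phi_2 \mathbf{C}_{\rm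 opt}\|$, coincides with the one obtained by nearest-neighbour search in feature space, $\arg\min_{\Pi'}\|\Pi' F_1 - F_2\|$. (2) Conversely, if $F_1, F_2$ are complete and $\mathbf{C}_{\rm opt}$ is basis-aligning, then $\arg\min_{\Pi}\|\Pi F_1 - F_2\| = \arg\min_{\Pi}\|\Pi\Phi_1 - \Phi_2 \mathbf{C}_{\rm opt}\|$. Here all minimizations over $\Pi$ range over point-to-point map matrices $\Pi\in\{0,1\}^{n_2\times n_1}$.
   Context: A point-to-point map from the vertices of $S_2$ to the vertices of $S_1$ is encoded as a matrix $\Pi \in \{0,1\}^{n_2 \times n_1}$ with exactly one entry equal to $1$ in each row ($\Pi(i,j)=1$ iff vertex $i$ of $S_2$ is mapped to vertex $j$ of $S_1$). Norms $\|\cdot\|$ are Frobenius norms. A functional map $\mathbf{C}_{12}\in\mathbb{R}^{k\times k}$ is called basis-aligning if there exists a point-to-point map matrix $\Pi_{21}\in\{0,1\}^{n_2\times n_1}$ such that $\Phi_2 \mathbf{C}_{12} = \Pi_{21}\Phi_1$. The "adjoint method" converts a functional map $\mathbf{C}_{12}$ into a point-to-point map by solving $\arg\min_{\Pi}\|\Pi\Phi_1 - \Phi_2\mathbf{C}_{12}\|$, i.e. nearest-neighbour search between rows of $\Phi_1$ and rows of $\Phi_2\mathbf{C}_{12}$. *)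

theory Defs
  imports "HOL-Analysis.Analysis"
begin

text \<open>Matrices are HOL-Analysis matrices: an m x n real matrix is of type
  real^'n^'m (rows indexed by 'm). The norm on real^'n^'m is the Euclidean norm
  of the vector of row norms, i.e. exactly the Frobenius norm.\<close>

definition p2p_map :: "real^'a^'b \<Rightarrow> bool" where
  "p2p_map P \<longleftrightarrow> (\<forall>i j. P$i$j = 0 \<or> P$i$j = 1) \<and> (\<forall>i. \<exists>!j. P$i$j = 1)"

definition basis_aligning ::
  "real^'k^'a \<Rightarrow> real^'k^'b \<Rightarrow> real^'k^'k \<Rightarrow> bool" where
  "basis_aligning Phi1 Phi2 C \<longleftrightarrow> (\<exists>P::real^'a^'b. p2p_map P \<and> Phi2 ** C = P ** Phi1)"

definition pinv_A :: "real^'k^'n \<Rightarrow> real^'n^'n \<Rightarrow> real^'n^'k" where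
  "pinv_A Phi A = transpose Phi ** A"

definition complete_feat :: "real^'k^'n \<Rightarrow> real^'n^'n \<Rightarrow> real^'p^'n \<Rightarrow> bool" where
  "complete_feat Phi A F \<longleftrightarrow> F = Phi ** (pinv_A Phi A ** F)"

definition spd :: "real^'n^'n \<Rightarrow> bool" where
  "spd A \<longleftrightarrow> transpose A = A \<and> (\<forall>x. x \<noteq> 0 \<longrightarrow> x \<bullet> (A *v x) > 0)"

definition eigenbasis ::
  "real^'n^'n \<Rightarrow> real^'n^'n \<Rightarrow> real^'k \<Rightarrow> real^'k^'n \<Rightarrow> bool" where
  "eigenbasis L A lam Phi \<longleftrightarrow> transpose L = L \<and> spd A \<and>
     L ** Phi = A ** Phi ** (\<chi> i j. if i = j then lam$i else 0) \<and>
     transpose Phi ** A ** Phi = mat 1"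

end

theory Submission
  imports Defs
begin



lemma mm_add_r: "((A::real^'n^'m) + B) ** (C::real^'p^'n) = A ** C + B ** C"
  by (vector matrix_matrix_mult_def sum.distrib[symmetric] field_simps)
lemma mm_diff_r: "((A::real^'n^'m) - B) ** (C::real^'p^'n) = A ** C - B ** C"
  by (vector matrix_matrix_mult_def sum_subtractf[symmetric] field_simps)
lemma mm_diff_l: "(A::real^'n^'m) ** ((B::real^'p^'n) - C) = A ** B - A ** C"
  by (vector matrix_matrix_mult_def sum_subtractf[symmetric] field_simps)
lemma mm_scale_l: "((t::real) *\<^sub>R (A::real^'n^'m)) ** (C::real^'p^'n) = t *\<^sub>R (A ** C)"
  by (simp add: scalar_matrix_assoc)

lemma inner_mm: "((X::real^'n^'m) ** (Y::real^'p^'n)) \<bullet> Z = X \<bullet> (Z ** transpose Y)"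
proof -
  have "((X ** Y) \<bullet> Z) = (\<Sum>i\<in>UNIV. \<Sum>k\<in>UNIV. \<Sum>j\<in>UNIV. X$i$j * Y$j$k * Z$i$k)"
    by (simp add: inner_vec_def matrix_matrix_mult_def sum_distrib_right)
  also have "\<dots> = (\<Sum>i\<in>UNIV. \<Sum>j\<in>UNIV. \<Sum>k\<in>UNIV. X$i$j * Y$j$k * Z$i$k)"
    by (rule sum.cong[OF refl], rule sum.swap)
  also have "\<dots> = X \<bullet> (Z ** transpose Y)"
    by (simp add: inner_vec_def matrix_matrix_mult_def transpose_def sum_distrib_left mult_ac)
  finally show ?thesis .
qed

lemma norm_orth:
  fixes X Y :: "real^'n^'m"
  assumes "X \<bullet> Y = 0" shows "norm Y \<le> norm (X + Y)"
proof -
  have "norm (X+Y)^2 = norm X^2 + norm Y^2"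
    using assms by (simp add: power2_norm_eq_inner inner_add inner_commute)
  hence "norm Y^2 \<le> norm (X+Y)^2" by simp
  thus ?thesis using power2_le_imp_le norm_ge_zero by blast
qed

lemma argmin_unique:
  assumes "p2p_map Q" "\<And>P. p2p_map P \<Longrightarrow> f Q \<le> (f P::real)"
    "\<exists>!P::real^'a^'b. is_arg_min f p2p_map P"
  shows "is_arg_min f p2p_map P \<longleftrightarrow> P = Q"
proof -
  have Q: "is_arg_min f p2p_map Q" using assms(1,2) by (auto simp: is_arg_min_def not_less)
  show ?thesis using assms(3) Q by blast
qed


lemma normal_eq:
  fixes B :: "real^'p^'k" and Y :: "real^'p^'m" and C :: "real^'k^'m"
  assumes min: "\<And>C'. norm (C ** B - Y) \<le> norm (C' ** B - Y)"
  shows "(C ** B - Y) ** transpose B = 0"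
proof (rule ccontr)
  define E where "E = C ** B - Y"
  define G where "G = E ** transpose B"
  assume "(C ** B - Y) ** transpose B \<noteq> 0"
  hence "G \<noteq> 0" by (simp add: G_def E_def)
  define g where "g = norm G ^ 2"
  define h where "h = norm (G ** B) ^ 2"
  have gpos: "g > 0" using \<open>G \<noteq> 0\<close> by (simp add: g_def)
  have h0: "h \<ge> 0" by (simp add: h_def)
  define t where "t = g / (h + 1)"
  have tpos: "t > 0" using gpos h0 by (simp add: t_def)
  have eq1: "(C - t *\<^sub>R G) ** B - Y = E - t *\<^sub>R (G ** B)"
    by (simp add: mm_diff_r mm_scale_l E_def)
  have EG: "E \<bullet> (G ** B) = g"
  proof -
    have "E \<bullet> (G ** B) = (G ** B) \<bullet> E" by (rule inner_commute)
    also have "\<dots> = G \<bullet> G" by (simp only: inner_mm G_def)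
    finally show ?thesis by (simp add: g_def power2_norm_eq_inner)
  qed
  have "norm (E - t *\<^sub>R (G ** B)) ^ 2 = E \<bullet> E - 2 * t * (E \<bullet> (G ** B)) + t^2 * ((G ** B) \<bullet> (G ** B))"
    unfolding power2_norm_eq_inner inner_diff_left inner_diff_right inner_scaleR_left inner_scaleR_right
    by (simp add: inner_commute[of "G ** B" E] power2_eq_square right_diff_distrib)
  hence "norm (E - t *\<^sub>R (G ** B)) ^ 2 = norm E ^ 2 - 2 * t * g + t^2 * h"
    using EG by (simp add: power2_norm_eq_inner h_def)
  moreover have "norm E \<le> norm (E - t *\<^sub>R (G ** B))"
    using min[of "C - t *\<^sub>R G"] eq1 by (simp add: E_def)
  hence "norm E ^ 2 \<le> norm (E - t *\<^sub>R (G ** B)) ^ 2"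
    by (simp add: power_mono)
  ultimately have "2 * t * g \<le> t * (t * h)" by (simp add: power2_eq_square)
  hence "2 * g \<le> t * h" using tpos by (simp add: mult.assoc)
  moreover have "t * h < g"
  proof -
    have "t * h = g * (h / (h+1))" by (simp add: t_def)
    also have "\<dots> < g * 1" using gpos h0 by (intro mult_strict_left_mono) auto
    finally show ?thesis by simp
  qed
  ultimately show False using gpos by simp
qed

lemma kill_left:
  fixes B :: "real^'p^'k" and Y :: "real^'p^'m" and C :: "real^'k^'m"
  assumes am: "is_arg_min (\<lambda>C. norm (C ** B - Y)) (\<lambda>_. True) C"
    and un: "\<And>C'. is_arg_min (\<lambda>C. norm (C ** B - Y)) (\<lambda>_. True) C' \<Longrightarrow> C' = C"
    and D: "(D::real^'k^'m) ** B = 0"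
  shows "D = 0"
proof -
  have "(C + D) ** B = C ** B" using D by (simp add: mm_add_r)
  hence "is_arg_min (\<lambda>C. norm (C ** B - Y)) (\<lambda>_. True) (C + D)"
    using am by (simp add: is_arg_min_def)
  hence "C + D = C" by (rule un)
  thus ?thesis by simp
qed

lemma kill_any:
  fixes M :: "real^'k^'n" and B :: "real^'p^'k"
  assumes kl: "\<And>D::real^'k^'k. D ** B = 0 \<Longrightarrow> D = 0"
    and MB: "M ** B = 0"
  shows "M = 0"
proof -
  have "M $ i $ s = 0" for i s
  proof -
    define X :: "real^'n^'k" where "X = (\<chi> r j. if j = i then 1 else 0)"
    have "(X ** M) ** B = 0" using MB by (simp add: matrix_mul_assoc[symmetric])
    hence XM: "X ** M = 0" by (rule kl)
    have "(X ** M) $ r $ s = M $ i $ s" for r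
    proof -
      have "(\<Sum>k\<in>UNIV. (if k = i then 1 else 0) * M$k$s) = (\<Sum>k\<in>UNIV. if k = i then M$k$s else (0::real))"
        by (rule sum.cong) auto
      thus ?thesis by (simp add: X_def matrix_matrix_mult_def)
    qed
    thus ?thesis using XM by simp
  qed
  thus ?thesis by (simp add: vec_eq_iff)
qed

theorem theorem1:
  fixes L1 A1 :: "real^'a::finite^'a" and L2 A2 :: "real^'b::finite^'b"
    and lam1 lam2 :: "real^'k::finite"
    and Phi1 :: "real^'k^'a" and Phi2 :: "real^'k^'b"
    and F1 :: "real^'p::finite^'a" and F2 :: "real^'p^'b"
    and Copt :: "real^'k^'k"
  assumes eig1: "eigenbasis L1 A1 lam1 Phi1"
    and eig2: "eigenbasis L2 A2 lam2 Phi2"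
    and compl1: "complete_feat Phi1 A1 F1"
    and compl2: "complete_feat Phi2 A2 F2"
    and Copt_min: "is_arg_min (\<lambda>C. norm (C ** (pinv_A Phi1 A1 ** F1) - pinv_A Phi2 A2 ** F2))
                     (\<lambda>_. True) Copt"
    and Copt_uniq: "\<And>C. is_arg_min (\<lambda>C. norm (C ** (pinv_A Phi1 A1 ** F1) - pinv_A Phi2 A2 ** F2))
                     (\<lambda>_. True) C \<Longrightarrow> C = Copt"
    and feat_uniq: "\<exists>!P::real^'a^'b. is_arg_min (\<lambda>P. norm (P ** F1 - F2)) p2p_map P"
    and adj_uniq: "\<exists>!P::real^'a^'b. is_arg_min (\<lambda>P. norm (P ** Phi1 - Phi2 ** Copt)) p2p_map P"
  shows
   "(\<forall>Pi::real^'a^'b. p2p_map Pi \<and> Pi ** F1 = F2 \<longrightarrow>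
        basis_aligning Phi1 Phi2 (pinv_A Phi2 A2 ** Pi ** Phi1) \<and>
        pinv_A Phi2 A2 ** Pi ** Phi1 = Copt \<and>
        (\<forall>P::real^'a^'b. is_arg_min (\<lambda>P. norm (P ** Phi1 - Phi2 ** Copt)) p2p_map P \<longleftrightarrow>
                          is_arg_min (\<lambda>P. norm (P ** F1 - F2)) p2p_map P))
    \<and> (basis_aligning Phi1 Phi2 Copt \<longrightarrow>
        (\<forall>P::real^'a^'b. is_arg_min (\<lambda>P. norm (P ** F1 - F2)) p2p_map P \<longleftrightarrow>
                          is_arg_min (\<lambda>P. norm (P ** Phi1 - Phi2 ** Copt)) p2p_map P))"
  proof -
  define B where "B = pinv_A Phi1 A1 ** F1"
  define Y where "Y = pinv_A Phi2 A2 ** F2"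
  have F1B: "F1 = Phi1 ** B" using compl1 by (simp add: complete_feat_def B_def)
  have F2Y: "F2 = Phi2 ** Y" using compl2 by (simp add: complete_feat_def Y_def)
  have am: "is_arg_min (\<lambda>C. norm (C ** B - Y)) (\<lambda>_. True) Copt"
    using Copt_min by (simp add: B_def Y_def)
  have un: "\<And>C'. is_arg_min (\<lambda>C. norm (C ** B - Y)) (\<lambda>_. True) C' \<Longrightarrow> C' = Copt"
    using Copt_uniq by (simp add: B_def Y_def)
  have kl: "\<And>D::real^'k^'k. D ** B = 0 \<Longrightarrow> D = 0"
    by (rule kill_left[OF am un])
  have part1: "basis_aligning Phi1 Phi2 (pinv_A Phi2 A2 ** Pi ** Phi1) \<and>
        pinv_A Phi2 A2 ** Pi ** Phi1 = Copt \<and>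
        (\<forall>P::real^'a^'b. is_arg_min (\<lambda>P. norm (P ** Phi1 - Phi2 ** Copt)) p2p_map P \<longleftrightarrow>
                          is_arg_min (\<lambda>P. norm (P ** F1 - F2)) p2p_map P)"
    if Pi: "p2p_map Pi" and PiF: "Pi ** F1 = F2" for Pi :: "real^'a^'b"
  proof -
    define C12 where "C12 = pinv_A Phi2 A2 ** Pi ** Phi1"
    have "(Pi ** Phi1 - Phi2 ** C12) ** B = 0"
    proof -
      have "(Pi ** Phi1 - Phi2 ** C12) ** B = Pi ** F1 - Phi2 ** (pinv_A Phi2 A2 ** (Pi ** F1))"
        by (simp add: mm_diff_r C12_def F1B matrix_mul_assoc)
      also have "\<dots> = 0" using PiF compl2 by (simp add: complete_feat_def)
      finally show ?thesis .
    qed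
    hence "Pi ** Phi1 - Phi2 ** C12 = 0" using kill_any[of B, OF kl] by blast
    hence al: "Phi2 ** C12 = Pi ** Phi1" by simp
    have ba: "basis_aligning Phi1 Phi2 C12"
      unfolding basis_aligning_def using al Pi by blast
    have "C12 ** B = Y"
    proof -
      have "C12 ** B = pinv_A Phi2 A2 ** (Pi ** F1)"
        by (simp add: C12_def F1B matrix_mul_assoc)
      thus ?thesis using PiF by (simp add: Y_def)
    qed
    hence "is_arg_min (\<lambda>C. norm (C ** B - Y)) (\<lambda>_. True) C12"
      by (simp add: is_arg_min_def)
    hence Ceq: "C12 = Copt" by (rule un)
    have e1: "is_arg_min (\<lambda>P. norm (P ** Phi1 - Phi2 ** Copt)) p2p_map P \<longleftrightarrow> P = Pi" for P
      by (rule argmin_unique[OF Pi _ adj_uniq]) (use al Ceq in simp)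
    have e2: "is_arg_min (\<lambda>P. norm (P ** F1 - F2)) p2p_map P \<longleftrightarrow> P = Pi" for P
      by (rule argmin_unique[OF Pi _ feat_uniq]) (use PiF in simp)
    show ?thesis using ba Ceq e1 e2 by (simp add: C12_def)
  qed
  have part2: "\<forall>P::real^'a^'b. is_arg_min (\<lambda>P. norm (P ** F1 - F2)) p2p_map P \<longleftrightarrow>
                          is_arg_min (\<lambda>P. norm (P ** Phi1 - Phi2 ** Copt)) p2p_map P"
    if ba: "basis_aligning Phi1 Phi2 Copt"
  proof -
    obtain Q :: "real^'a^'b" where Q: "p2p_map Q" and QC: "Phi2 ** Copt = Q ** Phi1"
      using ba unfolding basis_aligning_def by blast
    have e1: "is_arg_min (\<lambda>P. norm (P ** Phi1 - Phi2 ** Copt)) p2p_map P \<longleftrightarrow> P = Q" for P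
      by (rule argmin_unique[OF Q _ adj_uniq]) (use QC in simp)
    have ne: "(Copt ** B - Y) ** transpose B = 0"
      by (rule normal_eq) (use am in \<open>auto simp: is_arg_min_def not_less\<close>)
    define E where "E = Copt ** B - Y"
    have ineq: "norm (Q ** F1 - F2) \<le> norm (P ** F1 - F2)" for P :: "real^'a^'b"
    proof -
      have QF: "Q ** F1 - F2 = Phi2 ** E"
        by (simp add: E_def F1B F2Y mm_diff_l matrix_mul_assoc QC)
      have PF: "P ** F1 - F2 = (P ** Phi1 - Phi2 ** Copt) ** B + Phi2 ** E"
        by (simp add: E_def F1B F2Y mm_diff_l mm_diff_r matrix_mul_assoc)
      have "((P ** Phi1 - Phi2 ** Copt) ** B) \<bullet> (Phi2 ** E) = 0"
        using ne by (simp add: inner_mm E_def matrix_mul_assoc[symmetric])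
      thus ?thesis unfolding QF PF by (rule norm_orth)
    qed
    have e2: "is_arg_min (\<lambda>P. norm (P ** F1 - F2)) p2p_map P \<longleftrightarrow> P = Q" for P
      by (rule argmin_unique[OF Q _ feat_uniq]) (rule ineq)
    show ?thesis using e1 e2 by simp
  qed
  show ?thesis using part1 part2 by blast
qed


end
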